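(* Let $K, L, N$ be positive integers. Consider the $K$-user SIMO broadcast channel with a single transmit antenna, $N$ antennas at each receiver, symbol extension factor $L$, and no CSIT, as described in the context. Then the maximum achievable SpAC is $\frac{L-K+1}{L}$.
   Context: Model: one single-antenna transmitter and $K$ receivers with $N$ antennas each. Over $L$ channel uses, receiver $i$ observes $\mathbf{y}_i=\mathbf{H}_{i,i}\sum_{j=1}^K\mathbf{Q}_j\mathbf{x}_j+\mathbf{n}_i\in\mathbb{C}^{NL}$, where $\mathbf{H}_{i,i}\in\mathbb{C}^{NL\times L}$ is block diagonal with $L$ diagonal blocks $\mathbf{h}_{i,i}(t)\in\mathbb{C}^{N\times 1}$, $\mathbf{x}_j\in\mathbb{C}^d$ is the finite-alphabet symbol vector for receiver $j$, $\mathbf{Q}_j\in\mathbb{C}^{L\times d}$ its precoder (rank $d$), and $\mathbf{n}_i$ Gaussian noise. No CSIT: the precoders are fixed and independent of the channel coefficients. At receiver $i$, the desired subspace is $\mathcal{S}_i=\mathrm{span}(\mathbf{H}_{i,i}\mathbf{Q}_i)$ and the interference subspace is $\mathcal{I}_i=\sum_{j\ne i}\mathrm{span}(\mathbf{H}_{i,i}\mathbf{Q}_j)$. A value $d$ is achievable if there exist channel-independent precoders such that, for almost every realization of the channel coefficients, $\mathcal{S}_i\not\subseteq\mathcal{I}_i$ for every receiver $i$. The SpAC is $d/L$, and the maximum achievable SpAC is the maximum of $d/L$ over achievable $d$. *)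

theory Defs
  imports "HOL-Analysis.Analysis" "Jordan_Normal_Form.DL_Rank"
begin

text \<open>Channel coefficients: h (i, t, a) is the coefficient from the single transmit
  antenna to antenna a (a < N) of receiver i (i < K) in channel use t (t < L).\<close>

definition chan_idx :: "nat \<Rightarrow> nat \<Rightarrow> nat \<Rightarrow> (nat \<times> nat \<times> nat) set" where
  "chan_idx K L N = {(i, t, a). i < K \<and> t < L \<and> a < N}"

text \<open>The block-diagonal (N L) x L channel matrix H_{i,i} of receiver i: its t-th diagonal
  block is the column h_{i,i}(t) in C^N, occupying rows t N, ..., t N + N - 1 of column t.\<close>

definition chan_mat :: "nat \<Rightarrow> nat \<Rightarrow> ((nat \<times> nat \<times> nat) \<Rightarrow> complex) \<Rightarrow> nat \<Rightarrow> complex mat" where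
  "chan_mat N L h i = mat (N * L) L (\<lambda>(r, c). if r div N = c then h (i, c, r mod N) else 0)"

definition desired_sub ::
  "nat \<Rightarrow> nat \<Rightarrow> ((nat \<times> nat \<times> nat) \<Rightarrow> complex) \<Rightarrow> (nat \<Rightarrow> complex mat) \<Rightarrow> nat \<Rightarrow> complex vec set" where
  "desired_sub N L h Q i = vec_space.col_space (N * L) (chan_mat N L h i * Q i)"

definition interf_sub ::
  "nat \<Rightarrow> nat \<Rightarrow> nat \<Rightarrow> ((nat \<times> nat \<times> nat) \<Rightarrow> complex) \<Rightarrow> (nat \<Rightarrow> complex mat) \<Rightarrow> nat \<Rightarrow> complex vec set" where
  "interf_sub K N L h Q i =
     module.span class_ring (module_vec TYPE(complex) (N * L)) (\<Union>j\<in>{j. j < K \<and> j \<noteq> i}. set (cols (chan_mat N L h i * Q j)))"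

definition achievable :: "nat \<Rightarrow> nat \<Rightarrow> nat \<Rightarrow> nat \<Rightarrow> bool" where
  "achievable K N L d \<longleftrightarrow>
     (\<exists>Q :: nat \<Rightarrow> complex mat.
        (\<forall>j < K. Q j \<in> carrier_mat L d \<and> vec_space.rank L (Q j) = d) \<and>
        (AE h in (\<Pi>\<^sub>M x\<in>chan_idx K L N. (lborel :: complex measure)).
            \<forall>i < K. \<not> desired_sub N L h Q i \<subseteq> interf_sub K N L h Q i))"

end

theory Submission
  imports Defs
begin

context vec_space begin
lemma upper_lin:
  fixes Q :: "nat \<Rightarrow> 'a mat" and u :: "nat \<Rightarrow> 'a vec"
  assumes K: "0 < K"
    and Q: "\<And>j. j < K \<Longrightarrow> Q j \<in> carrier_mat n d \<and> rank (Q j) = d"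
    and uc: "\<And>k. k < K \<Longrightarrow> u k \<in> span (set (cols (Q k)))"
    and un: "\<And>k. k < K \<Longrightarrow> u k \<notin> span (\<Union>j\<in>{j. j < K \<and> j \<noteq> k}. set (cols (Q j)))"
  shows "d + K - 1 \<le> n"
proof -
  have Q0: "Q 0 \<in> carrier_mat n d" "rank (Q 0) = d" using Q K by auto
  have dist: "distinct (cols (Q 0))"
  proof (rule ccontr)
    assume nd: "\<not> distinct (cols (Q 0))"
    obtain S where S: "maximal S (\<lambda>T. T \<subseteq> set (cols (Q 0)) \<and> lin_indpt T)"
      using maximal_exists[of "(\<lambda>T. T \<subseteq> set (cols (Q 0)) \<and> lin_indpt T)" "card (set (cols (Q 0)))" "{}"]
      by (meson List.finite_set card_mono empty_iff empty_subsetI finite_lin_indpt2 rev_finite_subset)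
    then have "card S \<le> card (set (cols (Q 0)))" by (simp add: card_mono maximal_def)
    also have "\<dots> < length (cols (Q 0))" using nd card_distinct card_length le_neq_implies_less by metis
    also have "\<dots> = d" using Q0 by simp
    finally show False using rank_card_indpt[OF Q0(1) S] Q0(2) by simp
  qed
  have li0: "lin_indpt (set (cols (Q 0)))" using full_rank_lin_indpt[OF Q0 dist] .
  have card0: "card (set (cols (Q 0))) = d" using dist Q0 distinct_card by fastforce
  have ucar: "u k \<in> carrier_vec n" if "k < K" for k
    using uc[OF that] span_is_subset2[of "set (cols (Q k))"] Q[OF that] cols_dim by fastforce
  define T where "T m = set (cols (Q 0)) \<union> u ` {1..m}" for m
  have "T m \<subseteq> carrier_vec n \<and> lin_indpt (T m) \<and> card (T m) = d + m" if "m < K" for m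
    using that
  proof (induction m)
    case 0
    then show ?case using li0 card0 Q0 cols_dim unfolding T_def by fastforce
  next
    case (Suc m)
    then have IH: "T m \<subseteq> carrier_vec n" "lin_indpt (T m)" "card (T m) = d + m" by auto
    let ?G = "\<Union>j\<in>{j. j < K \<and> j \<noteq> Suc m}. set (cols (Q j))"
    have Gc: "?G \<subseteq> carrier_vec n" using Q cols_dim by fastforce
    have "T m \<subseteq> span ?G"
    proof
      fix x assume "x \<in> T m"
      then consider "x \<in> set (cols (Q 0))" | k where "k \<in> {1..m}" "x = u k" unfolding T_def by auto
      then show "x \<in> span ?G"
      proof cases
        case 1
        then have "x \<in> ?G" using K by auto
        then show ?thesis using in_own_span[OF Gc] by auto
      next
        case 2
        have "set (cols (Q k)) \<subseteq> ?G" using 2 Suc.prems by (auto intro!: exI[of _ k])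
        then have "span (set (cols (Q k))) \<subseteq> span ?G"
          by (rule span_is_monotone)
        then show ?thesis using uc[of k] 2 Suc.prems by auto
      qed
    qed
    then have sp: "span (T m) \<subseteq> span ?G"
      using span_is_subset[OF _ span_is_submodule[OF Gc]] by blast
    have nin: "u (Suc m) \<notin> span (T m)" using un[OF Suc.prems] sp by auto
    have nin2: "u (Suc m) \<notin> T m" using nin in_own_span[OF IH(1)] by auto
    have uc': "u (Suc m) \<in> carrier_vec n" using ucar Suc.prems by auto
    have li: "lin_indpt (T m \<union> {u (Suc m)})"
      using lin_dep_iff_in_span[OF IH(1) IH(2) _ nin2] uc' nin by auto
    have iv: "{1..Suc m} = insert (Suc m) {1..m}" by auto
    have TS: "T (Suc m) = insert (u (Suc m)) (T m)" unfolding T_def iv by auto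
    have fin: "finite (T m)" unfolding T_def by auto
    show ?case using TS li IH uc' nin2 fin by auto
  qed
  then have "T (K - 1) \<subseteq> carrier_vec n" "lin_indpt (T (K - 1))" "card (T (K - 1)) = d + (K - 1)"
    using K by auto
  then have "d + (K - 1) \<le> dim" using li_le_dim(2)[OF fin_dim, of "T (K - 1)"] by simp
  then show ?thesis using dim_is_n K by simp
qed
end


lemma chan_mat_carrier[simp]: "chan_mat N L h i \<in> carrier_mat (N * L) L"
  unfolding chan_mat_def by simp
lemma chan_mat_dims[simp]: "dim_row (chan_mat N L h i) = N * L" "dim_col (chan_mat N L h i) = L"
  unfolding chan_mat_def by simp_all

lemma mult_zero_vec_aux: "A \<in> carrier_mat nr nc \<Longrightarrow> A *\<^sub>v 0\<^sub>v nc = (0\<^sub>v nr :: 'a :: comm_ring_1 vec)"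
  by (rule eq_vecI) auto

lemma interf_pre:
  fixes Q :: "nat \<Rightarrow> complex mat"
  assumes Q: "\<And>j. j < K \<Longrightarrow> Q j \<in> carrier_mat L d" and i: "i < K"
  shows "module.span class_ring (module_vec TYPE(complex) L) (\<Union>j\<in>{j. j < K \<and> j \<noteq> i}. set (cols (Q j)))
     \<subseteq> {v \<in> carrier_vec L. chan_mat N L h i *\<^sub>v v \<in> interf_sub K N L h Q i}"
proof -
  interpret V: vec_space "TYPE(complex)" L .
  interpret W: vec_space "TYPE(complex)" "N * L" .
  let ?H = "chan_mat N L h i"
  let ?G = "\<Union>j\<in>{j. j < K \<and> j \<noteq> i}. set (cols (?H * Q j))"
  let ?I = "interf_sub K N L h Q i"
  have Gc: "?G \<subseteq> carrier_vec (N * L)"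
  proof -
    have "set (cols (?H * Q j)) \<subseteq> carrier_vec (N * L)" for j using cols_dim[of "?H * Q j"] by simp
    then show ?thesis by blast
  qed
  have I: "?I = W.span ?G" unfolding interf_sub_def by simp
  have Isub: "submodule class_ring ?I W.V" unfolding I by (rule W.span_is_submodule[OF Gc])
  have GI: "?G \<subseteq> ?I" unfolding I by (rule W.in_own_span[OF Gc])
  show ?thesis
  proof (rule V.span_is_subset)
    show "(\<Union>j\<in>{j. j < K \<and> j \<noteq> i}. set (cols (Q j))) \<subseteq> {v \<in> carrier_vec L. ?H *\<^sub>v v \<in> ?I}"
    proof
      fix x assume "x \<in> (\<Union>j\<in>{j. j < K \<and> j \<noteq> i}. set (cols (Q j)))"
      then obtain j c where j: "j < K" "j \<noteq> i" and c: "c < d" and x: "x = col (Q j) c"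
        using Q by (fastforce simp: cols_def)
      have "?H *\<^sub>v x = col (?H * Q j) c" using col_mult2[OF chan_mat_carrier Q[OF j(1)] c] x by simp
      also have "\<dots> \<in> ?G" using j c Q[OF j(1)] by (auto simp: cols_def)
      finally show "x \<in> {v \<in> carrier_vec L. ?H *\<^sub>v v \<in> ?I}" using GI x Q[OF j(1)] c by auto
    qed
    show "submodule class_ring {v \<in> carrier_vec L. ?H *\<^sub>v v \<in> ?I} V.V"
    proof -
      interpret I: submodule class_ring ?I W.V by (rule Isub)
      show ?thesis
        unfolding submodule_def
      proof (intro conjI allI impI ballI)
        show "module class_ring V.V" by (rule V.module_axioms)
      next
        fix v w assume "v \<in> {v \<in> carrier_vec L. ?H *\<^sub>v v \<in> ?I}" "w \<in> {v \<in> carrier_vec L. ?H *\<^sub>v v \<in> ?I}"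
        then show "v \<oplus>\<^bsub>V.V\<^esub> w \<in> {v \<in> carrier_vec L. ?H *\<^sub>v v \<in> ?I}"
          using I.m_closed[of "?H *\<^sub>v v" "?H *\<^sub>v w"]
          by (auto simp: mult_add_distrib_mat_vec[OF chan_mat_carrier])
      next
        show "\<zero>\<^bsub>V.V\<^esub> \<in> {v \<in> carrier_vec L. ?H *\<^sub>v v \<in> ?I}"
          using I.zero_closed mult_zero_vec_aux[OF chan_mat_carrier] by auto
      next
        fix c v assume "c \<in> carrier (class_ring :: complex ring)" "v \<in> {v \<in> carrier_vec L. ?H *\<^sub>v v \<in> ?I}"
        then show "c \<odot>\<^bsub>V.V\<^esub> v \<in> {v \<in> carrier_vec L. ?H *\<^sub>v v \<in> ?I}"
          using I.smult_closed[of c "?H *\<^sub>v v"]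
          by (auto simp: mult_mat_vec[OF chan_mat_carrier])
      qed auto
    qed
  qed
qed

lemma desired_pre:
  fixes Q :: "nat \<Rightarrow> complex mat"
  assumes Q: "Q i \<in> carrier_mat L d" and v: "v \<in> desired_sub N L h Q i"
  shows "\<exists>u \<in> module.span class_ring (module_vec TYPE(complex) L) (set (cols (Q i))).
           v = chan_mat N L h i *\<^sub>v u"
proof -
  interpret V: vec_space "TYPE(complex)" L .
  interpret W: vec_space "TYPE(complex)" "N * L" .
  let ?H = "chan_mat N L h i"
  have HQ: "?H * Q i \<in> carrier_mat (N * L) d" using mult_carrier_mat[OF chan_mat_carrier Q] .
  from v obtain x where x: "x \<in> carrier_vec d" "v = (?H * Q i) *\<^sub>v x"
    unfolding desired_sub_def W.col_space_eq[OF HQ] using Q by auto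
  have "Q i *\<^sub>v x \<in> V.col_space (Q i)" unfolding V.col_space_eq[OF Q] using Q x by auto
  moreover have "v = ?H *\<^sub>v (Q i *\<^sub>v x)" using x Q by (simp add: assoc_mult_mat_vec[OF chan_mat_carrier Q])
  ultimately show ?thesis unfolding V.col_space_def by auto
qed



lemma finite_chan_idx: "finite (chan_idx K L N)"
proof -
  have "chan_idx K L N \<subseteq> {..<K} \<times> {..<L} \<times> {..<N}" unfolding chan_idx_def by auto
  then show ?thesis by (rule finite_subset) auto
qed

abbreviation PM :: "nat \<Rightarrow> nat \<Rightarrow> nat \<Rightarrow> ((nat \<times> nat \<times> nat) \<Rightarrow> complex) measure" where
  "PM K L N \<equiv> (\<Pi>\<^sub>M x\<in>chan_idx K L N. (lborel :: complex measure))"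

lemma PM_nonzero_component:
  assumes x: "x \<in> chan_idx K L N"
  shows "AE h in PM K L N. h x \<noteq> 0"
proof -
  interpret product_sigma_finite "\<lambda>_. (lborel :: complex measure)"
    by unfold_locales
  let ?I = "chan_idx K L N"
  let ?A = "\<lambda>j. if j = x then {0::complex} else UNIV"
  have sets: "?A j \<in> sets lborel" for j by auto
  have "emeasure (PM K L N) (Pi\<^sub>E ?I ?A) = (\<Prod>j\<in>?I. emeasure lborel (?A j))"
    by (rule emeasure_PiM[OF finite_chan_idx]) (rule sets)
  also have "\<dots> = 0"
    using x finite_chan_idx by (intro prod_zero) (auto intro!: bexI[of _ x])
  finally have null: "Pi\<^sub>E ?I ?A \<in> null_sets (PM K L N)"
    using sets_PiM_I_finite[OF finite_chan_idx, where E="?A" and M="\<lambda>_. lborel"] sets by auto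
  show ?thesis
    by (rule AE_I'[OF null]) (auto simp: space_PiM PiE_def Pi_def)
qed

lemma PM_space_nonzero:
  assumes "0 < K" "0 < L" "0 < N"
  shows "emeasure (PM K L N) (space (PM K L N)) \<noteq> 0"
proof -
  interpret product_sigma_finite "\<lambda>_. (lborel :: complex measure)"
    by unfold_locales
  have "space (PM K L N) = Pi\<^sub>E (chan_idx K L N) (\<lambda>_. UNIV)" by (simp add: space_PiM)
  then have "emeasure (PM K L N) (space (PM K L N)) = (\<Prod>j\<in>chan_idx K L N. emeasure lborel (UNIV :: complex set))"
    using emeasure_PiM[OF finite_chan_idx, where A="\<lambda>_. UNIV"] by simp
  also have "\<dots> = \<infinity> ^ card (chan_idx K L N)" by simp
  also have "\<dots> \<noteq> 0" by simp
  finally show ?thesis .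
qed

lemma AE_ex:
  assumes "emeasure M (space M) \<noteq> 0" "AE x in M. P x"
  shows "\<exists>x. P x"
proof (rule ccontr)
  assume "\<not> (\<exists>x. P x)"
  from assms(2) obtain N where N: "{x \<in> space M. \<not> P x} \<subseteq> N" "emeasure M N = 0" "N \<in> sets M"
    by (rule AE_E)
  then have "space M \<subseteq> N" using \<open>\<not> (\<exists>x. P x)\<close> by auto
  then have "emeasure M (space M) \<le> emeasure M N" by (intro emeasure_mono) (auto simp: N)
  then show False using N assms(1) by simp
qed



lemma chan_unit_index:
  assumes t: "t < L" and r: "r < N * L"
  shows "(chan_mat N L h i *\<^sub>v unit_vec L t) $ r = (if r div N = t then h (i, t, r mod N) else 0)"
proof -
  have "(chan_mat N L h i *\<^sub>v unit_vec L t) $ r = row (chan_mat N L h i) r \<bullet> unit_vec L t"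
    using r by simp
  also have "\<dots> = row (chan_mat N L h i) r $ t" using t by simp
  also have "\<dots> = chan_mat N L h i $$ (r, t)" using r t by simp
  also have "\<dots> = (if r div N = t then h (i, t, r mod N) else 0)"
    unfolding chan_mat_def using r t by simp
  finally show ?thesis .
qed

definition idxs :: "nat \<Rightarrow> nat \<Rightarrow> nat \<Rightarrow> nat list" where
  "idxs K L j = [0..<L - K] @ [L - K + j]"

definition Qa :: "nat \<Rightarrow> nat \<Rightarrow> nat \<Rightarrow> complex mat" where
  "Qa K L j = mat_of_cols L (map (unit_vec L) (idxs K L j))"

lemma Qa_cols: "cols (Qa K L j) = map (unit_vec L) (idxs K L j)"
  unfolding Qa_def by (rule cols_mat_of_cols) auto

lemma Qa_carrier: "Qa K L j \<in> carrier_mat L (L - K + 1)"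
  unfolding Qa_def idxs_def using mat_of_cols_carrier(1)[of L "map (unit_vec L) ([0..<L - K] @ [L - K + j])"]
  by simp

lemma Qa_dims[simp]: "dim_col (Qa K L j) = L - K + 1" "dim_row (Qa K L j) = L"
  using Qa_carrier[of K L j] by auto

lemma Qa_rank:
  assumes "j < K" "K \<le> L"
  shows "vec_space.rank L (Qa K L j) = L - K + 1"
proof -
  interpret V: vec_space "TYPE(complex)" L .
  have sub: "set (idxs K L j) \<subseteq> {..<L}" using assms unfolding idxs_def by auto
  have inj: "inj_on (unit_vec L :: nat \<Rightarrow> complex vec) {..<L}"
    by (intro inj_onI) auto
  have dist: "distinct (cols (Qa K L j))" unfolding Qa_cols
    using inj sub by (auto simp: distinct_map idxs_def intro: inj_on_subset)
  have "set (cols (Qa K L j)) \<subseteq> set (unit_vecs L)"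
    unfolding Qa_cols unit_vecs_def using sub by auto
  moreover have "V.lin_indpt (set (unit_vecs L))"
    using V.unit_vecs_basis unfolding V.basis_def by auto
  ultimately have li: "V.lin_indpt (set (cols (Qa K L j)))"
    using V.subset_li_is_li by blast
  show ?thesis using V.lin_indpt_full_rank[OF Qa_carrier dist li] .
qed

lemma interf_zero:
  assumes N: "0 < N" and i: "i < K" and KL: "K \<le> L"
  defines "r0 \<equiv> N * (L - K + i)"
  shows "interf_sub K N L h (Qa K L) i \<subseteq> {w \<in> carrier_vec (N * L). w $ r0 = 0}"
proof -
  interpret W: vec_space "TYPE(complex)" "N * L" .
  let ?H = "chan_mat N L h i"
  let ?Z = "{w \<in> carrier_vec (N * L). w $ r0 = (0::complex)}"
  have t0: "L - K + i < L" using i KL by simp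
  have r0: "r0 < N * L" unfolding r0_def using t0 N by simp
  have r0div: "r0 div N = L - K + i" "r0 mod N = 0" unfolding r0_def using N by simp_all
  show ?thesis unfolding interf_sub_def
  proof (rule W.span_is_subset)
    show "(\<Union>j\<in>{j. j < K \<and> j \<noteq> i}. set (cols (?H * Qa K L j))) \<subseteq> ?Z"
    proof
      fix x assume "x \<in> (\<Union>j\<in>{j. j < K \<and> j \<noteq> i}. set (cols (?H * Qa K L j)))"
      then obtain j where j: "j < K" "j \<noteq> i" and xj: "x \<in> set (cols (?H * Qa K L j))" by auto
      then obtain c where c0: "c < length (cols (?H * Qa K L j))" and x0: "x = cols (?H * Qa K L j) ! c"
        by (metis in_set_conv_nth)
      have c: "c < L - K + 1" using c0 by simp
      have x: "x = col (?H * Qa K L j) c" using x0 c by simp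
      have "col (Qa K L j) c = cols (Qa K L j) ! c" using c Qa_carrier[of K L j] by simp
      also have "\<dots> = unit_vec L (idxs K L j ! c)"
      proof -
        have "c < length (idxs K L j)" using c by (simp add: idxs_def)
        then show ?thesis by (simp only: Qa_cols nth_map)
      qed
      finally have cq: "col (Qa K L j) c = unit_vec L (idxs K L j ! c)" .
      have tc: "idxs K L j ! c < L" "idxs K L j ! c \<noteq> L - K + i"
        using c j KL unfolding idxs_def by (auto simp: nth_append)
      have x': "x = ?H *\<^sub>v unit_vec L (idxs K L j ! c)"
        using col_mult2[OF chan_mat_carrier Qa_carrier c] x cq by simp
      have "x \<in> carrier_vec (N * L)" using x' mult_mat_vec_carrier[OF chan_mat_carrier unit_vec_carrier] by simp
      moreover have "x $ r0 = 0" using chan_unit_index[OF tc(1) r0] x' r0div tc(2) by simp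
      ultimately show "x \<in> ?Z" by simp
    qed
    show "submodule class_ring ?Z W.V"
      unfolding submodule_def
    proof (intro conjI allI impI ballI)
      show "module class_ring W.V" by (rule W.module_axioms)
    qed (use r0 in auto)
  qed
qed

lemma achievable_lower:
  assumes K: "0 < K" and N: "0 < N" and KL: "K \<le> L"
  shows "achievable K N L (L - K + 1)"
  unfolding achievable_def
proof (intro exI conjI allI impI)
  fix j assume "j < K"
  then show "Qa K L j \<in> carrier_mat L (L - K + 1)" "vec_space.rank L (Qa K L j) = L - K + 1"
    using Qa_carrier Qa_rank KL by auto
next
  have AE: "AE h in PM K L N. \<forall>x\<in>chan_idx K L N. h x \<noteq> 0"
    by (rule AE_finite_allI[OF finite_chan_idx]) (rule PM_nonzero_component)
  show "AE h in PM K L N. \<forall>i<K. \<not> desired_sub N L h (Qa K L) i \<subseteq> interf_sub K N L h (Qa K L) i"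
  proof (rule AE_mp[OF AE], intro AE_I2 impI allI)
    fix h :: "nat \<times> nat \<times> nat \<Rightarrow> complex" and i
    assume hnz: "\<forall>x\<in>chan_idx K L N. h x \<noteq> 0" and i: "i < K"
    interpret W: vec_space "TYPE(complex)" "N * L" .
    let ?H = "chan_mat N L h i"
    define t0 where "t0 = L - K + i"
    define r0 where "r0 = N * (L - K + i)"
    have t0: "t0 < L" using i KL unfolding t0_def by simp
    have r0: "r0 < N * L" unfolding r0_def using t0 N t0_def by simp
    have r0div: "r0 div N = t0" "r0 mod N = 0" unfolding r0_def t0_def using N by simp_all
    let ?v = "col (?H * Qa K L i) (L - K)"
    have cq: "col (Qa K L i) (L - K) = unit_vec L t0"
    proof -
      have "col (Qa K L i) (L - K) = cols (Qa K L i) ! (L - K)" using Qa_carrier[of K L i] by simp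
      also have "\<dots> = unit_vec L t0" unfolding Qa_cols t0_def by (simp add: idxs_def nth_append)
      finally show ?thesis .
    qed
    have v: "?v = ?H *\<^sub>v unit_vec L t0"
      using col_mult2[OF chan_mat_carrier Qa_carrier, of "L - K"] cq by simp
    have "?v \<in> set (cols (?H * Qa K L i))"
      using Qa_carrier[of K L i] by (auto simp: cols_def)
    then have vd: "?v \<in> desired_sub N L h (Qa K L) i"
      unfolding desired_sub_def W.col_space_def
      using W.in_own_span[of "set (cols (?H * Qa K L i))"] cols_dim[of "?H * Qa K L i"] by auto
    have "(i, t0, 0) \<in> chan_idx K L N" using i t0 N unfolding chan_idx_def by simp
    then have "?v $ r0 \<noteq> (0::complex)" using v chan_unit_index[OF t0 r0] r0div hnz by simp
    then have "?v \<notin> interf_sub K N L h (Qa K L) i"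
      using interf_zero[OF N i KL] unfolding r0_def by auto
    then show "\<not> desired_sub N L h (Qa K L) i \<subseteq> interf_sub K N L h (Qa K L) i" using vd by auto
  qed
qed



lemma upper_bound:
  assumes K: "0 < K" and L: "0 < L" and N: "0 < N" and ach: "achievable K N L d"
  shows "d + K - 1 \<le> L"
proof -
  obtain Q :: "nat \<Rightarrow> complex mat" where
    QA: "(\<forall>j < K. Q j \<in> carrier_mat L d \<and> vec_space.rank L (Q j) = d) \<and>
        (AE h in PM K L N. \<forall>i < K. \<not> desired_sub N L h Q i \<subseteq> interf_sub K N L h Q i)"
    using ach unfolding achievable_def by (rule exE)
  note Q = conjunct1[OF QA] and AE = conjunct2[OF QA]
  obtain h where h: "\<forall>i < K. \<not> desired_sub N L h Q i \<subseteq> interf_sub K N L h Q i"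
    using AE_ex[OF PM_space_nonzero[OF K L N] AE] by (rule exE)
  have Qc: "\<And>j. j < K \<Longrightarrow> Q j \<in> carrier_mat L d" using Q by auto
  define P where "P k w \<longleftrightarrow> (k < K \<longrightarrow> w \<in> module.span class_ring (module_vec TYPE(complex) L) (set (cols (Q k))) \<and>
      w \<notin> module.span class_ring (module_vec TYPE(complex) L) (\<Union>j\<in>{j. j < K \<and> j \<noteq> k}. set (cols (Q j))))" for k w
  have ex: "\<exists>w. P k w" for k
  proof (cases "k < K")
    case True
    then obtain v where v: "v \<in> desired_sub N L h Q k" "v \<notin> interf_sub K N L h Q k" using h by blast
    obtain w where w: "w \<in> module.span class_ring (module_vec TYPE(complex) L) (set (cols (Q k)))"
      "v = chan_mat N L h k *\<^sub>v w"
      using desired_pre[OF Qc[OF True] v(1)] by blast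
    have sub: "module.span class_ring (module_vec TYPE(complex) L) (\<Union>j\<in>{j. j < K \<and> j \<noteq> k}. set (cols (Q j)))
     \<subseteq> {v \<in> carrier_vec L. chan_mat N L h k *\<^sub>v v \<in> interf_sub K N L h Q k}"
      by (rule interf_pre[where K=K and Q=Q and L=L and d=d and i=k and N=N and h=h]) (use Qc True in auto)
    have "w \<notin> module.span class_ring (module_vec TYPE(complex) L) (\<Union>j\<in>{j. j < K \<and> j \<noteq> k}. set (cols (Q j)))"
    proof
      assume "w \<in> module.span class_ring (module_vec TYPE(complex) L) (\<Union>j\<in>{j. j < K \<and> j \<noteq> k}. set (cols (Q j)))"
      with sub have "chan_mat N L h k *\<^sub>v w \<in> interf_sub K N L h Q k" by blast
      with w(2) v(2) show False by simp
    qed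
    then show ?thesis unfolding P_def using w(1) by blast
  next
    case False
    then show ?thesis unfolding P_def by blast
  qed
  define u where "u k = (SOME w. P k w)" for k
  have Pu: "P k (u k)" for k unfolding u_def by (rule someI_ex[OF ex])
  have u: "\<And>k. k < K \<Longrightarrow> u k \<in> module.span class_ring (module_vec TYPE(complex) L) (set (cols (Q k)))"
    "\<And>k. k < K \<Longrightarrow> u k \<notin> module.span class_ring (module_vec TYPE(complex) L) (\<Union>j\<in>{j. j < K \<and> j \<noteq> k}. set (cols (Q j)))"
    using Pu unfolding P_def by auto
  have Q2: "\<And>j. j < K \<Longrightarrow> Q j \<in> carrier_mat L d \<and> vec_space.rank L (Q j) = d" using Q by blast
  show ?thesis
    by (rule vec_space.upper_lin[OF K Q2 u(1) u(2)])
qed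

theorem corollary2:
  fixes K L N :: nat
  assumes "0 < K" and "0 < L" and "0 < N" and "K \<le> L"
  shows "(real L - real K + 1) / real L \<in> {real d / real L | d. achievable K N L d} \<and>
         (\<forall>x \<in> {real d / real L | d. achievable K N L d}. x \<le> (real L - real K + 1) / real L)"
proof -
  have eq: "real L - real K + 1 = real (L - K + 1)" using assms(4) by (simp add: of_nat_diff)
  have A: "achievable K N L (L - K + 1)" using achievable_lower assms by simp
  have B: "real d / real L \<le> real (L - K + 1) / real L" if "achievable K N L d" for d
  proof -
    have "d + K - 1 \<le> L" using upper_bound assms that by blast
    then have "d \<le> L - K + 1" using assms by linarith
    then show ?thesis by (intro divide_right_mono) auto
  qed
  have C1: "real (L - K + 1) / real L \<in> {real d / real L | d. achievable K N L d}"
    using A by blast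
  have C2: "\<forall>x \<in> {real d / real L | d. achievable K N L d}. x \<le> real (L - K + 1) / real L"
  proof
    fix x assume "x \<in> {real d / real L | d. achievable K N L d}"
    then obtain d where "x = real d / real L" "achievable K N L d" by blast
    then show "x \<le> real (L - K + 1) / real L" using B by simp
  qed
  show ?thesis unfolding eq using C1 C2 by (rule conjI)
qed

end
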